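(* Let $\gamma\ge 1$ be a constant, $\kappa=\gamma^{1/4}$, and for $m\in\mathbb N$ let $n=\lfloor\gamma m\rfloor$, $N=n+m$. Let $b>0$ be a constant, $d=b\log N$, $p=d/\sqrt{mn}$. Let $\mathcal G$ be the random bipartite graph on $V_1=\{1,\dots,n\}$, $V_2=\{n+1,\dots,n+m\}$ in which each pair $\{x,y\}$, $x\in V_1,y\in V_2$, is an edge independently with probability $p$, and let $D^{(1)}=\mathrm{diag}\{D_x\}_{x\in V_1}$ be the diagonal matrix of degrees of the vertices in $V_1$. Let $h(u)=(1+u)\log(1+u)-u$ and assume $b>\kappa^2[h(\kappa^2-1)]^{-1}$. Then there exist constants $\epsilon>0$ and $\nu>0$ such that with probability at least $1-N^{-\nu}$, $$\|(I_n-d^{-1}D^{(1)})^{-1}\|\le\epsilon^{-1}.$$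
   Context: $\log$ is the natural logarithm; $\|\cdot\|$ is the operator norm. *)

theory Defs
  imports "HOL-Probability.Probability"
begin

definition hfun :: "real \<Rightarrow> real" where
  "hfun u = (1 + u) * ln (1 + u) - u"

definition mat_mult_on :: "'i set \<Rightarrow> ('i \<Rightarrow> 'i \<Rightarrow> real) \<Rightarrow> ('i \<Rightarrow> 'i \<Rightarrow> real) \<Rightarrow> 'i \<Rightarrow> 'i \<Rightarrow> real" where
  "mat_mult_on I A B = (\<lambda>i j. \<Sum>k\<in>I. A i k * B k j)"

definition id_mat :: "'i \<Rightarrow> 'i \<Rightarrow> real" where
  "id_mat = (\<lambda>i j. if i = j then 1 else 0)"

definition is_inverse_on :: "'i set \<Rightarrow> ('i \<Rightarrow> 'i \<Rightarrow> real) \<Rightarrow> ('i \<Rightarrow> 'i \<Rightarrow> real) \<Rightarrow> bool" where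
  "is_inverse_on I A B \<longleftrightarrow>
     (\<forall>i\<in>I. \<forall>j\<in>I. mat_mult_on I A B i j = id_mat i j \<and> mat_mult_on I B A i j = id_mat i j)"

definition op_norm_on :: "'i set \<Rightarrow> ('i \<Rightarrow> 'i \<Rightarrow> real) \<Rightarrow> real" where
  "op_norm_on I A = (SUP v\<in>{v. (\<Sum>j\<in>I. (v j)^2) = 1}. sqrt (\<Sum>i\<in>I. (\<Sum>j\<in>I. A i j * v j)^2))"

definition random_bipartite :: "nat set \<Rightarrow> nat set \<Rightarrow> real \<Rightarrow> (nat \<times> nat \<Rightarrow> bool) pmf" where
  "random_bipartite V1 V2 p = Pi_pmf (V1 \<times> V2) False (\<lambda>_. bernoulli_pmf p)"

definition degree1 :: "nat set \<Rightarrow> (nat \<times> nat \<Rightarrow> bool) \<Rightarrow> nat \<Rightarrow> nat" where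
  "degree1 V2 G x = card {y\<in>V2. G (x, y)}"

definition degree_mat :: "nat set \<Rightarrow> (nat \<times> nat \<Rightarrow> bool) \<Rightarrow> nat \<Rightarrow> nat \<Rightarrow> real" where
  "degree_mat V2 G = (\<lambda>x y. if x = y then real (degree1 V2 G x) else 0)"

end

theory Submission
  imports Defs
begin

lemma bern_min: "0 \<le> p \<Longrightarrow> bernoulli_pmf p = bernoulli_pmf (min 1 p)"
proof -
  interpret pmf_as_function .
  show "0 \<le> p \<Longrightarrow> bernoulli_pmf p = bernoulli_pmf (min 1 p)"
    by transfer (auto simp: fun_eq_iff)
qed

lemma deg_prod:
  fixes s :: real
  assumes "finite V1" "finite V2" "x \<in> V1"
  shows "(\<Prod>z\<in>V1\<times>V2. (if fst z = x \<and> G z then exp s else 1)) = exp (s * real (degree1 V2 G x))"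
proof -
  have fin: "finite (V1 \<times> V2)" using assms by auto
  have "(\<Prod>z\<in>V1\<times>V2. (if fst z = x \<and> G z then exp s else 1)) = exp s ^ card ((V1\<times>V2) \<inter> {z. fst z = x \<and> G z})"
    using fin by (simp add: prod.If_cases)
  also have "card ((V1\<times>V2) \<inter> {z. fst z = x \<and> G z}) = card {y\<in>V2. G (x, y)}"
  proof -
    have "(V1\<times>V2) \<inter> {z. fst z = x \<and> G z} = (\<lambda>y. (x, y)) ` {y\<in>V2. G (x, y)}"
      using assms by auto
    then show ?thesis by (simp add: card_image inj_on_def)
  qed
  finally show ?thesis by (simp add: degree1_def exp_of_nat_mult[symmetric] mult.commute)
qed

lemma chernoff_deg:
  fixes V1 V2 :: "nat set" and p s t :: real
  assumes "finite V1" "finite V2" "x \<in> V1" "0 \<le> p" "0 < s"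
  shows "measure_pmf.prob (random_bipartite V1 V2 p) {G. t \<le> real (degree1 V2 G x)}
     \<le> exp (- s * t) * exp (real (card V2) * p * (exp s - 1))"
proof -
  define M where "M = random_bipartite V1 V2 p"
  define g where "g = (\<lambda>(z::nat\<times>nat) (b::bool). if fst z = x \<and> b then exp s else (1::real))"
  define u where "u = (\<lambda>G. \<Prod>z\<in>V1\<times>V2. g z (G z))"
  have fin: "finite (V1 \<times> V2)" using assms by auto
  have uD: "u G = exp (s * real (degree1 V2 G x))" for G
    unfolding u_def g_def using deg_prod[OF assms(1-3)] by simp
  define q where "q = min 1 p"
  have q: "0 \<le> q" "q \<le> 1" "q \<le> p" using assms unfolding q_def by auto
  have M: "M = Pi_pmf (V1 \<times> V2) False (\<lambda>_. bernoulli_pmf q)"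
    unfolding M_def random_bipartite_def q_def using bern_min[OF assms(4)] by simp
  have Eu: "measure_pmf.expectation M u = (\<Prod>z\<in>V1\<times>V2. measure_pmf.expectation (bernoulli_pmf q) (g z))"
    unfolding M u_def
    by (rule expectation_prod_Pi_pmf[OF fin]) (auto simp: g_def intro: integrable_measure_pmf_finite)
  also have "\<dots> = (\<Prod>z\<in>V1\<times>V2. (if fst z = x then 1 + q * (exp s - 1) else 1))"
    using q by (intro prod.cong) (auto simp: g_def algebra_simps)
  also have "\<dots> = (1 + q * (exp s - 1)) ^ card ((V1\<times>V2) \<inter> {z. fst z = x})"
    using fin by (simp add: prod.If_cases)
  also have "card ((V1\<times>V2) \<inter> {z. fst z = x}) = card V2"
  proof -
    have "(V1\<times>V2) \<inter> {z. fst z = x} = (\<lambda>y. (x, y)) ` V2"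
      using assms by auto
    then show ?thesis by (simp add: card_image inj_on_def)
  qed
  also have "(1 + q * (exp s - 1)) ^ card V2 \<le> exp (p * (exp s - 1)) ^ card V2"
  proof (rule power_mono)
    have "exp s \<ge> 1" using assms by simp
    then have "1 + q * (exp s - 1) \<le> 1 + p * (exp s - 1)"
      using q by (intro add_left_mono mult_right_mono) auto
    also have "\<dots> \<le> exp (p * (exp s - 1))" by simp
    finally show "1 + q * (exp s - 1) \<le> exp (p * (exp s - 1))" .
    show "0 \<le> 1 + q * (exp s - 1)" using q \<open>exp s \<ge> 1\<close> by simp
  qed
  also have "\<dots> = exp (real (card V2) * p * (exp s - 1))"
    by (simp add: exp_of_nat_mult[symmetric] mult.assoc)
  finally have Eu_le: "measure_pmf.expectation M u \<le> exp (real (card V2) * p * (exp s - 1))" .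
  have "{G. t \<le> real (degree1 V2 G x)} \<subseteq> {G\<in>space (measure_pmf M). u G \<ge> exp (s * t)}"
    using assms by (auto simp: uD)
  then have "measure_pmf.prob M {G. t \<le> real (degree1 V2 G x)} \<le> measure_pmf.prob M {G\<in>space (measure_pmf M). u G \<ge> exp (s * t)}"
    by (intro measure_pmf.finite_measure_mono) auto
  also have "\<dots> \<le> measure_pmf.expectation M u / exp (s * t)"
  proof (rule integral_Markov_inequality_measure[where A = UNIV])
    show "integrable (measure_pmf M) u" unfolding M u_def
      by (rule integrable_prod_Pi_pmf[OF fin]) (auto intro: integrable_measure_pmf_finite)
    show "AE G in measure_pmf M. 0 \<le> u G" by (intro AE_I2) (simp add: uD)
  qed auto
  also have "\<dots> \<le> exp (real (card V2) * p * (exp s - 1)) / exp (s * t)"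
    by (intro divide_right_mono Eu_le) auto
  finally show ?thesis unfolding M_def by (simp add: exp_minus field_simps)
qed

lemma good_inverse:
  fixes V1 V2 :: "nat set" and d \<epsilon> :: real
  assumes "finite V1" "j0 \<in> V1" "0 < d" "0 < \<epsilon>"
    and le: "\<And>x. x \<in> V1 \<Longrightarrow> real (degree1 V2 G x) \<le> (1 - \<epsilon>) * d"
  shows "\<exists>B. is_inverse_on V1 (\<lambda>x y. id_mat x y - degree_mat V2 G x y / d) B \<and> op_norm_on V1 B \<le> 1 / \<epsilon>"
proof -
  define c where "c = (\<lambda>i. 1 - real (degree1 V2 G i) / d)"
  have cge: "c i \<ge> \<epsilon>" if "i \<in> V1" for i
  proof -
    have "real (degree1 V2 G i) / d \<le> 1 - \<epsilon>" using le[OF that] assms by (simp add: divide_simps)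
    then show ?thesis by (simp add: c_def)
  qed
  have cpos: "c i > 0" if "i \<in> V1" for i using cge[OF that] assms by simp
  define B where "B = (\<lambda>i j. if i = j then 1 / c i else (0::real))"
  have A: "(\<lambda>x y. id_mat x y - degree_mat V2 G x y / d) = (\<lambda>i j. if i = j then c i else 0)"
    by (auto simp: fun_eq_iff id_mat_def degree_mat_def c_def)
  have s1: "(\<Sum>k\<in>V1. (if i = k then a else 0) * (if k = j then e k else 0)) = (if i = j then a * e i else (0::real))"
    if "i \<in> V1" for i j a e
  proof -
    have "(\<Sum>k\<in>V1. (if i = k then a else 0) * (if k = j then e k else 0)) = (\<Sum>k\<in>V1. if i = k then a * (if i = j then e i else 0) else (0::real))"
      by (intro sum.cong) auto
    also have "\<dots> = a * (if i = j then e i else 0)" using assms(1) that by simp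
    finally show ?thesis by simp
  qed
  have inv': "is_inverse_on V1 (\<lambda>i j. if i = j then c i else 0) B"
    unfolding is_inverse_on_def mat_mult_on_def B_def id_mat_def
    using cpos by (auto simp: s1) (metis less_irrefl)
  have inv: "is_inverse_on V1 (\<lambda>x y. id_mat x y - degree_mat V2 G x y / d) B"
    using inv' by (simp only: A)
  have bound: "sqrt (\<Sum>i\<in>V1. (\<Sum>j\<in>V1. B i j * v j)^2) \<le> 1 / \<epsilon>" if v: "(\<Sum>j\<in>V1. (v j)^2) = 1" for v
  proof -
    have "(\<Sum>i\<in>V1. (\<Sum>j\<in>V1. B i j * v j)^2) = (\<Sum>i\<in>V1. (v i / c i)^2)"
    proof (intro sum.cong refl)
      fix i assume "i \<in> V1"
      have "(\<Sum>j\<in>V1. B i j * v j) = (\<Sum>j\<in>V1. if i = j then v i / c i else 0)"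
        by (intro sum.cong) (auto simp: B_def)
      also have "\<dots> = v i / c i" using assms(1) \<open>i \<in> V1\<close> by simp
      finally show "(\<Sum>j\<in>V1. B i j * v j)^2 = (v i / c i)^2" by simp
    qed
    also have "\<dots> \<le> (\<Sum>i\<in>V1. (v i)^2 / \<epsilon>^2)"
    proof (intro sum_mono)
      fix i assume i: "i \<in> V1"
      have "(v i / c i)^2 = (v i)^2 / (c i)^2" by (simp add: power_divide)
      also have "\<dots> \<le> (v i)^2 / \<epsilon>^2"
        using cge[OF i] assms(4) by (intro divide_left_mono power_mono) auto
      finally show "(v i / c i)^2 \<le> (v i)^2 / \<epsilon>^2" .
    qed
    also have "\<dots> = (1 / \<epsilon>)^2" using v by (simp add: sum_divide_distrib[symmetric] power_divide)
    finally have "sqrt (\<Sum>i\<in>V1. (\<Sum>j\<in>V1. B i j * v j)^2) \<le> sqrt ((1/\<epsilon>)^2)"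
      by (rule real_sqrt_le_mono)
    also have "\<dots> = 1 / \<epsilon>" using assms(4) by simp
    finally show ?thesis .
  qed
  have ne: "{v. (\<Sum>j\<in>V1. (v j)^2) = (1::real)} \<noteq> {}"
  proof -
    have "(\<Sum>j\<in>V1. ((\<lambda>j. if j = j0 then 1 else 0::real) j)^2) = 1"
    proof -
      have "(\<Sum>j\<in>V1. ((\<lambda>j. if j = j0 then 1 else 0::real) j)^2) = (\<Sum>j\<in>V1. if j0 = j then 1 else 0::real)"
        by (intro sum.cong) auto
      also have "\<dots> = 1" using assms(1,2) by simp
      finally show ?thesis .
    qed
    then have "(\<lambda>j. if j = j0 then 1 else 0::real) \<in> {v. (\<Sum>j\<in>V1. (v j)^2) = (1::real)}" by simp
    then show ?thesis by (metis empty_iff)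
  qed
  have "op_norm_on V1 B \<le> 1 / \<epsilon>"
    unfolding op_norm_on_def by (rule cSUP_least[OF ne]) (rule bound, simp)
  with inv show ?thesis by blast
qed

lemma main_bound:
  fixes \<gamma> b g \<epsilon> \<delta> \<nu> \<eta> :: real and m :: nat
  assumes g: "g = sqrt \<gamma>" "g > 1" and b: "b > 0"
    and eta: "\<eta> = b * (g * ln g - (g - 1)) - g" "\<eta> > 0"
    and defs: "\<epsilon> = \<eta> / (4 * b * g * ln g)" "\<delta> = \<eta> / (4 * b * (g - 1))" "\<nu> = \<eta> / (2 * g)"
    and m: "real m \<ge> (1 + \<delta>) / \<delta>" "m \<ge> 3"
  shows "measure_pmf.prob (random_bipartite {1..nat \<lfloor>\<gamma> * real m\<rfloor>} {nat \<lfloor>\<gamma> * real m\<rfloor>+1..nat \<lfloor>\<gamma> * real m\<rfloor>+m}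
             (b * ln (real (nat \<lfloor>\<gamma> * real m\<rfloor> + m)) / sqrt (real m * real (nat \<lfloor>\<gamma> * real m\<rfloor>))))
          {G. \<exists>B. is_inverse_on {1..nat \<lfloor>\<gamma> * real m\<rfloor>} (\<lambda>x y. id_mat x y - degree_mat {nat \<lfloor>\<gamma> * real m\<rfloor>+1..nat \<lfloor>\<gamma> * real m\<rfloor>+m} G x y / (b * ln (real (nat \<lfloor>\<gamma> * real m\<rfloor> + m)))) B
                  \<and> op_norm_on {1..nat \<lfloor>\<gamma> * real m\<rfloor>} B \<le> 1 / \<epsilon>}
        \<ge> 1 - real (nat \<lfloor>\<gamma> * real m\<rfloor> + m) powr (- \<nu>)"
proof -
  define n where "n = nat \<lfloor>\<gamma> * real m\<rfloor>"
  define N where "N = n + m"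
  define d where "d = b * ln (real N)"
  define p where "p = d / sqrt (real m * real n)"
  define V1 where "V1 = {1..n}"
  define V2 where "V2 = {n+1..n+m}"
  define t where "t = (1 - \<epsilon>) * d"
  have \<gamma>1: "\<gamma> > 1" using g by (metis real_sqrt_gt_1_iff)
  have g2: "g^2 = \<gamma>" using g(1) \<gamma>1 by simp
  have lng: "ln g > 0" using g(2) by simp
  have pos: "\<epsilon> > 0" "\<delta> > 0" "\<nu> > 0" using defs eta g(2) b lng by auto
  have nlow: "real n \<ge> \<gamma> * real m - 1"
  proof -
    have fl: "0 \<le> \<lfloor>\<gamma> * real m\<rfloor>" using \<gamma>1 by simp
    have "real n = real_of_int \<lfloor>\<gamma> * real m\<rfloor>" unfolding n_def using fl by simp
    moreover have "\<gamma> * real m - 1 < real_of_int \<lfloor>\<gamma> * real m\<rfloor>" by simp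
    ultimately show ?thesis by linarith
  qed
  have mge: "\<gamma> * real m \<ge> real m" using \<gamma>1 mult_right_mono[of 1 \<gamma> "real m"] by simp
  have n1: "n \<ge> 1" using nlow mge m by linarith
  have N4: "real N \<ge> 4" using n1 m unfolding N_def by linarith
  have lnN: "ln (real N) > 0" using N4 by simp
  have dpos: "d > 0" using lnN b by (simp add: d_def)
  have "\<delta> * \<gamma> * real m \<ge> \<delta> * real m" using mult_left_mono[OF mge, of \<delta>] pos by (simp add: mult.assoc)
  moreover have "\<delta> * real m \<ge> 1 + \<delta>"
  proof -
    have "1 + \<delta> \<le> real m * \<delta>" using m(1) pos(2) by (simp add: pos_divide_le_eq)
    then show ?thesis by (simp add: mult.commute)
  qed
  ultimately have dgm: "\<delta> * \<gamma> * real m \<ge> 1 + \<delta>" by linarith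
  have "(1 + \<delta>) * (\<gamma> * real m - 1) \<le> (1 + \<delta>) * real n"
    by (rule mult_left_mono[OF nlow]) (use pos in simp)
  moreover have "(1 + \<delta>) * (\<gamma> * real m - 1) = \<gamma> * real m + (\<delta> * \<gamma> * real m - 1 - \<delta>)"
    by (simp add: algebra_simps)
  ultimately have ratio: "\<gamma> * real m \<le> (1 + \<delta>) * real n" using dgm by linarith
  have ppos: "p \<ge> 0" using dpos by (simp add: p_def)
  have mp: "real m * p \<le> d * (1 + \<delta>) / g"
  proof (rule power2_le_imp_le)
    have "(real m * p)^2 = d^2 * real m / real n"
      using n1 m by (simp add: p_def power_divide power_mult_distrib power2_eq_square field_simps)
    also have "\<dots> \<le> d^2 * (1 + \<delta>) / \<gamma>"
    proof -
      have "real m / real n \<le> (1 + \<delta>) / \<gamma>" using ratio n1 \<gamma>1 by (simp add: field_simps)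
      then have "d^2 * (real m / real n) \<le> d^2 * ((1 + \<delta>) / \<gamma>)" by (rule mult_left_mono) simp
      then show ?thesis by simp
    qed
    also have "\<dots> \<le> d^2 * (1 + \<delta>)^2 / \<gamma>"
      using pos \<gamma>1 by (intro divide_right_mono mult_left_mono) (auto simp: power2_eq_square)
    also have "\<dots> = (d * (1 + \<delta>) / g)^2" using g2 by (simp add: power_divide power_mult_distrib)
    finally show "(real m * p)^2 \<le> (d * (1 + \<delta>) / g)^2" .
    show "0 \<le> d * (1 + \<delta>) / g" using dpos pos g(2) by simp
  qed
  have finV: "finite V1" "finite V2" by (auto simp: V1_def V2_def)
  have cardV2: "card V2 = m" by (simp add: V2_def)
  have cardV1: "card V1 = n" by (simp add: V1_def)
  define U where "U = (\<Union>x\<in>V1. {G. t \<le> real (degree1 V2 G x)})"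
  have each: "measure_pmf.prob (random_bipartite V1 V2 p) {G. t \<le> real (degree1 V2 G x)} \<le> real N powr (-(1 + \<nu>))"
    if x: "x \<in> V1" for x
  proof -
    have "measure_pmf.prob (random_bipartite V1 V2 p) {G. t \<le> real (degree1 V2 G x)}
          \<le> exp (- ln g * t) * exp (real (card V2) * p * (exp (ln g) - 1))"
      by (rule chernoff_deg[OF finV x ppos lng])
    also have "\<dots> = exp (- ln g * t + real m * p * (g - 1))"
      using g(2) by (simp add: cardV2 mult_exp_exp)
    also have "\<dots> \<le> exp (- ln g * t + d * (1 + \<delta>) / g * (g - 1))"
      using mp g(2) by (intro exp_le_cancel_iff[THEN iffD2] add_left_mono mult_right_mono) auto
    also have "- ln g * t + d * (1 + \<delta>) / g * (g - 1) = -(1 + \<nu>) * ln (real N)"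
      unfolding t_def d_def defs eta(1) using g(2) b lng by (simp add: field_simps)
    also have "exp (-(1 + \<nu>) * ln (real N)) = real N powr (-(1 + \<nu>))"
      using N4 by (simp add: powr_def)
    finally show ?thesis .
  qed
  have "measure_pmf.prob (random_bipartite V1 V2 p) U \<le> (\<Sum>x\<in>V1. measure_pmf.prob (random_bipartite V1 V2 p) {G. t \<le> real (degree1 V2 G x)})"
    unfolding U_def by (rule measure_pmf.finite_measure_subadditive_finite) (auto simp: finV)
  also have "\<dots> \<le> (\<Sum>x\<in>V1. real N powr (-(1 + \<nu>)))" by (intro sum_mono each)
  also have "\<dots> = real n * real N powr (-(1 + \<nu>))" by (simp add: cardV1)
  also have "\<dots> \<le> real N * real N powr (-(1 + \<nu>))"
    by (intro mult_right_mono) (auto simp: N_def)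
  also have "\<dots> = real N powr (- \<nu>)"
    using N4 by (simp add: powr_add[symmetric] powr_mult_base)
  finally have PU: "measure_pmf.prob (random_bipartite V1 V2 p) U \<le> real N powr (- \<nu>)" .
  have sub: "UNIV - U \<subseteq> {G. \<exists>B. is_inverse_on V1 (\<lambda>x y. id_mat x y - degree_mat V2 G x y / d) B
                  \<and> op_norm_on V1 B \<le> 1 / \<epsilon>}"
  proof
    fix G assume "G \<in> UNIV - U"
    then have le: "real (degree1 V2 G x) \<le> (1 - \<epsilon>) * d" if "x \<in> V1" for x
      using that by (auto simp: U_def t_def)
    have "1 \<in> V1" using n1 by (simp add: V1_def)
    from good_inverse[OF finV(1) this dpos pos(1) le] show "G \<in> {G. \<exists>B. is_inverse_on V1 (\<lambda>x y. id_mat x y - degree_mat V2 G x y / d) B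
                  \<and> op_norm_on V1 B \<le> 1 / \<epsilon>}" by simp
  qed
  have "1 - real N powr (- \<nu>) \<le> 1 - measure_pmf.prob (random_bipartite V1 V2 p) U" using PU by simp
  also have "\<dots> = measure_pmf.prob (random_bipartite V1 V2 p) (UNIV - U)"
    using measure_pmf.prob_compl[of U "random_bipartite V1 V2 p"] by simp
  also have "\<dots> \<le> measure_pmf.prob (random_bipartite V1 V2 p) {G. \<exists>B. is_inverse_on V1 (\<lambda>x y. id_mat x y - degree_mat V2 G x y / d) B
                  \<and> op_norm_on V1 B \<le> 1 / \<epsilon>}"
    by (intro measure_pmf.finite_measure_mono sub) auto
  finally show ?thesis unfolding n_def N_def d_def p_def V1_def V2_def .
qed

theorem lemma6p7:
  fixes \<gamma> b :: real
  defines "\<kappa> \<equiv> \<gamma> powr (1/4)"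
  assumes "\<gamma> \<ge> 1" and "b > 0"
    and "b * hfun (\<kappa>^2 - 1) > \<kappa>^2"
  shows "\<exists>\<epsilon>>0. \<exists>\<nu>>0. \<forall>\<^sub>F m in sequentially.
    (let n = nat \<lfloor>\<gamma> * real m\<rfloor>; N = n + m; d = b * ln (real N);
         p = d / sqrt (real m * real n); V1 = {1..n}; V2 = {n+1..n+m}
     in measure_pmf.prob (random_bipartite V1 V2 p)
          {G. \<exists>B. is_inverse_on V1 (\<lambda>x y. id_mat x y - degree_mat V2 G x y / d) B
                  \<and> op_norm_on V1 B \<le> 1 / \<epsilon>}
        \<ge> 1 - real N powr (- \<nu>))"
proof -
  define g where "g = sqrt \<gamma>"
  have kg: "\<kappa>^2 = g"
  proof -
    have "\<kappa>^2 = \<gamma> powr (1/4) * \<gamma> powr (1/4)" by (simp add: \<kappa>_def power2_eq_square)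
    also have "\<dots> = \<gamma> powr (1/2)" by (simp add: powr_add[symmetric])
    also have "\<dots> = g" using assms(2) by (simp add: g_def powr_half_sqrt)
    finally show ?thesis .
  qed
  have hf: "hfun (\<kappa>^2 - 1) = g * ln g - (g - 1)" unfolding hfun_def kg by simp
  have gge: "g \<ge> 1" using assms(2) by (simp add: g_def)
  have g1: "g > 1"
  proof (rule ccontr)
    assume "\<not> g > 1"
    then have "g = 1" using gge by simp
    then show False using assms(4) hf kg by simp
  qed
  define \<eta> where "\<eta> = b * (g * ln g - (g - 1)) - g"
  have etapos: "\<eta> > 0" using assms(4) hf kg by (simp add: \<eta>_def)
  define \<epsilon> where "\<epsilon> = \<eta> / (4 * b * g * ln g)"
  define \<delta> where "\<delta> = \<eta> / (4 * b * (g - 1))"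
  define \<nu> where "\<nu> = \<eta> / (2 * g)"
  have lng: "ln g > 0" using g1 by simp
  have pos: "\<epsilon> > 0" "\<delta> > 0" "\<nu> > 0"
    using etapos g1 lng assms(3) by (auto simp: \<epsilon>_def \<delta>_def \<nu>_def)
  have ev: "eventually (\<lambda>m. m \<ge> nat \<lceil>(1 + \<delta>) / \<delta>\<rceil> + 3) sequentially"
    by (rule eventually_ge_at_top)
  have "\<forall>\<^sub>F m in sequentially.
    (let n = nat \<lfloor>\<gamma> * real m\<rfloor>; N = n + m; d = b * ln (real N);
         p = d / sqrt (real m * real n); V1 = {1..n}; V2 = {n+1..n+m}
     in measure_pmf.prob (random_bipartite V1 V2 p)
          {G. \<exists>B. is_inverse_on V1 (\<lambda>x y. id_mat x y - degree_mat V2 G x y / d) B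
                  \<and> op_norm_on V1 B \<le> 1 / \<epsilon>}
        \<ge> 1 - real N powr (- \<nu>))"
    using ev
  proof (rule eventually_mono)
    fix m :: nat assume hm: "m \<ge> nat \<lceil>(1 + \<delta>) / \<delta>\<rceil> + 3"
    have "nat \<lceil>(1 + \<delta>) / \<delta>\<rceil> \<le> m" using hm by linarith
    then have "real m \<ge> real (nat \<lceil>(1 + \<delta>) / \<delta>\<rceil>)" by (simp only: of_nat_le_iff)
    then have m1: "real m \<ge> (1 + \<delta>) / \<delta>" using real_nat_ceiling_ge[of "(1 + \<delta>) / \<delta>"] by linarith
    have m3: "m \<ge> 3" using hm by simp
    from main_bound[OF g_def g1 assms(3) \<eta>_def etapos \<epsilon>_def \<delta>_def \<nu>_def m1 m3]
    show "let n = nat \<lfloor>\<gamma> * real m\<rfloor>; N = n + m; d = b * ln (real N);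
         p = d / sqrt (real m * real n); V1 = {1..n}; V2 = {n+1..n+m}
     in measure_pmf.prob (random_bipartite V1 V2 p)
          {G. \<exists>B. is_inverse_on V1 (\<lambda>x y. id_mat x y - degree_mat V2 G x y / d) B
                  \<and> op_norm_on V1 B \<le> 1 / \<epsilon>}
        \<ge> 1 - real N powr (- \<nu>)" by (simp add: Let_def)
  qed
  then show ?thesis using pos by blast
qed

end
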